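(* Let $w$ be a string of length $n$ with minimal period $p>1$, and let $k=\max\{l\ge 0 : w[1..l]=w[j..j+l-1]\text{ for some } j \text{ with } 1<j\le p\}$. Then the leftmost critical point of $w$ is the leftmost position $i>k+1$ of $w$ such that $i-\mu(i)<1$ or $i+\mu(i)-1>n$.
   Context: $w[i..j]=w[i]\cdots w[j]$ (empty if $i>j$), and substrings $w[j..j+l-1]$ are required to lie within $w$. A period of $w$ is an integer $p$ with $0<p\le n$ and $w[j]=w[j+p]$ for all $1\le j\le n-p$. For a position $i\in\{1,\dots,n\}$, the local period $\mu(i)$ is the least positive integer $\mu$ such that $w[j]=w[j+\mu]$ for all $j$ with $\max\{1,i-\mu\}\le j$ and $j+\mu\le\min\{n,i+\mu-1\}$. A position $i$ is a critical point of $w$ if $\mu(i)$ equals the minimal period of $w$. *)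

theory Defs
  imports Main
begin

text \<open>Strings are lists; positions are 1-based: the letter at position j of w is w ! (j - 1).\<close>

definition letter :: "'a list \<Rightarrow> nat \<Rightarrow> 'a" where
  "letter w j = w ! (j - 1)"

text \<open>Substring w[i..i+l-1] (assumed to lie within w).\<close>
definition substr :: "'a list \<Rightarrow> nat \<Rightarrow> nat \<Rightarrow> 'a list" where
  "substr w i l = take l (drop (i - 1) w)"

definition is_period :: "'a list \<Rightarrow> nat \<Rightarrow> bool" where
  "is_period w p \<longleftrightarrow> 0 < p \<and> p \<le> length w \<and>
     (\<forall>j. 1 \<le> j \<and> j \<le> length w - p \<longrightarrow> letter w j = letter w (j + p))"

definition min_period :: "'a list \<Rightarrow> nat" where
  "min_period w = (LEAST p. is_period w p)"

definition local_period :: "'a list \<Rightarrow> nat \<Rightarrow> nat" where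
  "local_period w i = (LEAST \<mu>. 0 < \<mu> \<and>
     (\<forall>j. max 1 (int i - int \<mu>) \<le> int j \<and> j + \<mu> \<le> min (length w) (i + \<mu> - 1)
          \<longrightarrow> letter w j = letter w (j + \<mu>)))"

definition critical_point :: "'a list \<Rightarrow> nat \<Rightarrow> bool" where
  "critical_point w i \<longleftrightarrow> 1 \<le> i \<and> i \<le> length w \<and> local_period w i = min_period w"

definition border_k :: "'a list \<Rightarrow> nat" where
  "border_k w = Max {l. \<exists>j. 1 < j \<and> j \<le> min_period w \<and> j + l - 1 \<le> length w \<and>
                            substr w 1 l = substr w j l}"

end

theory Submission
  imports Defs
begin


definition rep :: "'a list \<Rightarrow> nat \<Rightarrow> nat \<Rightarrow> bool" where
  "rep w c m \<longleftrightarrow> (\<forall>t. c \<le> t + m \<longrightarrow> t < c \<longrightarrow> t + m < length w \<longrightarrow> w!t = w!(t+m))"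

lemma lp_eq:
  assumes "1 \<le> i"
  shows "local_period w i = (LEAST m. 0 < m \<and> rep w (i-1) m)"
proof -
  have eq: "\<And>m. (\<forall>j. max 1 (int i - int m) \<le> int j \<and> j + m \<le> min (length w) (i + m - 1)
          \<longrightarrow> letter w j = letter w (j + m)) \<longleftrightarrow> rep w (i-1) m"
  proof
    fix m assume H: "\<forall>j. max 1 (int i - int m) \<le> int j \<and> j + m \<le> min (length w) (i + m - 1)
          \<longrightarrow> letter w j = letter w (j + m)"
    show "rep w (i-1) m" unfolding rep_def
    proof (intro allI impI)
      fix t assume "i - 1 \<le> t + m" "t < i - 1" "t + m < length w"
      then have "max 1 (int i - int m) \<le> int (t+1) \<and> t+1+m \<le> min (length w) (i+m-1)" by auto
      then have "letter w (t+1) = letter w (t+1+m)" by (rule H[rule_format])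
      then show "w!t = w!(t+m)" by (simp add: letter_def)
    qed
  next
    fix m assume H: "rep w (i-1) m"
    show "\<forall>j. max 1 (int i - int m) \<le> int j \<and> j + m \<le> min (length w) (i + m - 1)
          \<longrightarrow> letter w j = letter w (j + m)"
    proof (intro allI impI)
      fix j assume J: "max 1 (int i - int m) \<le> int j \<and> j + m \<le> min (length w) (i + m - 1)"
      then have "i - 1 \<le> (j-1) + m" "j - 1 < i - 1" "(j-1) + m < length w" "1 \<le> j" using assms by auto
      then have "w!(j-1) = w!(j-1+m)" using H unfolding rep_def by simp
      then show "letter w j = letter w (j+m)" using \<open>1 \<le> j\<close> by (simp add: letter_def)
    qed
  qed
  show ?thesis unfolding local_period_def eq ..
qed

lemma period_eq: "is_period w p \<longleftrightarrow> 0 < p \<and> p \<le> length w \<and> (\<forall>t. t + p < length w \<longrightarrow> w!t = w!(t+p))"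
proof -
  have "(\<forall>j. 1 \<le> j \<and> j \<le> length w - p \<longrightarrow> letter w j = letter w (j + p)) \<longleftrightarrow>
        (\<forall>t. t + p < length w \<longrightarrow> w!t = w!(t+p))" if "p \<le> length w"
  proof
    assume H: "\<forall>j. 1 \<le> j \<and> j \<le> length w - p \<longrightarrow> letter w j = letter w (j + p)"
    show "\<forall>t. t + p < length w \<longrightarrow> w!t = w!(t+p)"
    proof (intro allI impI)
      fix t assume "t + p < length w"
      then have "letter w (t+1) = letter w (t+1+p)" using H[rule_format, of "t+1"] by auto
      then show "w!t = w!(t+p)" by (simp add: letter_def)
    qed
  next
    assume H: "\<forall>t. t + p < length w \<longrightarrow> w!t = w!(t+p)"
    show "\<forall>j. 1 \<le> j \<and> j \<le> length w - p \<longrightarrow> letter w j = letter w (j + p)"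
    proof (intro allI impI)
      fix j assume "1 \<le> j \<and> j \<le> length w - p"
      then have "(j-1) + p < length w" "1 \<le> j" using that by auto
      then have "w!(j-1) = w!(j-1+p)" using H by blast
      then show "letter w j = letter w (j+p)" using \<open>1 \<le> j\<close> by (simp add: letter_def)
    qed
  qed
  then show ?thesis unfolding is_period_def by blast
qed

lemma lexord_both_prefix:
  assumes "\<forall>a b. (a,b) \<in> r \<longrightarrow> (b,a) \<notin> r" "\<forall>a. (a,a) \<notin> r"
  shows "(x,y) \<in> lexord r \<Longrightarrow> (x,y) \<in> lexord (r\<inverse>) \<Longrightarrow> length x < length y \<and> (\<forall>t<length x. x!t = y!t)"
proof (induction x arbitrary: y)
  case Nil then show ?case by (cases y) auto
next
  case (Cons a x y)
  then obtain b y' where y: "y = b # y'" by (cases y) auto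
  from Cons.prems y assms have "a = b" "(x,y') \<in> lexord r" "(x,y') \<in> lexord (r\<inverse>)" by auto
  with Cons.IH[of y'] y show ?case by (auto simp: nth_Cons split: nat.splits)
qed

lemma lexord_prefixI:
  assumes "length x < length y" "\<forall>t<length x. x!t = y!t"
  shows "(x,y) \<in> lexord r"
proof -
  have "take (length x) y = x" using assms by (intro nth_equalityI) auto
  then show ?thesis using assms unfolding lexord_take_index_conv by blast
qed

lemma lexord_cancel:
  assumes "(x,y) \<in> lexord r" "\<forall>a. (a,a) \<notin> r" "d \<le> length x" "d \<le> length y" "\<forall>t<d. x!t = y!t"
  shows "(drop d x, drop d y) \<in> lexord r"
proof -
  have tk: "take d x = take d y" using assms by (intro nth_equalityI) auto
  have ex: "take d x @ drop d x = x" by simp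
  have ey: "take d x @ drop d y = y" using tk by simp
  have "(take d x @ drop d x, take d x @ drop d y) \<in> lexord r"
    unfolding ex ey by (rule assms(1))
  then show ?thesis using assms(2) by (rule lexord_append_leftD)
qed

lemma max_ex:
  assumes "finite S" "S \<noteq> {}" "trans R" "\<forall>x y. (x,y)\<in>R \<or> x=y \<or> (y,x)\<in>R"
  shows "\<exists>x\<in>S. \<forall>y\<in>S. y \<noteq> x \<longrightarrow> (y,x) \<in> R"
  using assms(1,2)
proof (induction S rule: finite_ne_induct)
  case (singleton x) then show ?case by auto
next
  case (insert x F)
  from insert.IH obtain m where m: "m \<in> F" "\<forall>y\<in>F. y \<noteq> m \<longrightarrow> (y,m) \<in> R" by auto
  show ?case
  proof (cases "(m,x) \<in> R")
    case True
    have "\<forall>y\<in>insert x F. y \<noteq> x \<longrightarrow> (y,x) \<in> R"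
    proof (intro ballI impI)
      fix y assume "y \<in> insert x F" "y \<noteq> x"
      then have "y \<in> F" by auto
      show "(y,x) \<in> R"
      proof (cases "y = m")
        case True then show ?thesis using \<open>(m,x) \<in> R\<close> by simp
      next
        case False
        then have "(y,m) \<in> R" using m \<open>y \<in> F\<close> by blast
        show ?thesis using assms(3) \<open>(y,m) \<in> R\<close> \<open>(m,x) \<in> R\<close> by (rule transD)
      qed
    qed
    then show ?thesis by auto
  next
    case False
    have "m \<noteq> x" using m insert.hyps by auto
    then have "(x,m) \<in> R" using False assms(4)[rule_format, of m x] by auto
    then have "\<forall>y\<in>insert x F. y \<noteq> m \<longrightarrow> (y,m) \<in> R" using m by auto
    then show ?thesis using m(1) by auto
  qed
qed



lemma cft_core:
  assumes irr: "\<forall>a. (a,a) \<notin> r" and tr: "trans r"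
    and per: "is_period w p" and pmin: "\<forall>q<p. \<not> is_period w q"
    and c1: "c1 < length w" "\<forall>c<length w. c \<noteq> c1 \<longrightarrow> (drop c w, drop c1 w) \<in> lexord r"
    and c2: "c2 < length w" "\<forall>c<length w. c \<noteq> c2 \<longrightarrow> (drop c w, drop c2 w) \<in> lexord (r\<inverse>)"
    and le: "c2 \<le> c1"
  shows "c1 < p \<and> (\<forall>m. 0 < m \<longrightarrow> m < p \<longrightarrow> \<not> rep w c1 m)"
proof -
  define n where "n = length w"
  have asy: "\<forall>a b. (a,b) \<in> r \<longrightarrow> (b,a) \<notin> r" using irr tr by (meson transD)
  have asyL: "\<And>x y. (x,y) \<in> lexord r \<Longrightarrow> (y,x) \<notin> lexord r"
    by (rule lexord_asymmetric) (use asy in \<open>auto intro: asymI\<close>)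
  have irr': "\<forall>a. (a,a) \<notin> r\<inverse>" using irr by auto
  from per have p0: "0 < p" "p \<le> n" and pp: "\<forall>t. t + p < n \<longrightarrow> w!t = w!(t+p)"
    unfolding period_eq n_def by auto
  have notper: "\<not> (\<forall>t. t + m < n \<longrightarrow> w!t = w!(t+m))" if "0 < m" "m < p" for m
  proof
    assume "\<forall>t. t + m < n \<longrightarrow> w!t = w!(t+m)"
    then have "is_period w m" unfolding period_eq n_def[symmetric] using that p0 by auto
    then show False using pmin that by auto
  qed
  define v where "v = drop c1 w"
  have lv: "length v = n - c1" unfolding v_def n_def by simp
  have vnth: "\<And>t. t < n - c1 \<Longrightarrow> v!t = w!(c1+t)" unfolding v_def n_def by simp
  have max1: "\<And>c. c < n \<Longrightarrow> c \<noteq> c1 \<Longrightarrow> (drop c w, v) \<in> lexord r"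
    using c1 unfolding v_def n_def by blast
  have c1lt: "c1 < p"
  proof (rule ccontr)
    assume "\<not> c1 < p"
    define s where "s = c1 - p"
    have "(v, drop s w) \<in> lexord r"
    proof (rule lexord_prefixI)
      show "length v < length (drop s w)" using lv p0 \<open>\<not> c1 < p\<close> c1 unfolding s_def n_def by auto
      show "\<forall>t<length v. v ! t = drop s w ! t"
      proof (intro allI impI)
        fix t assume "t < length v"
        then have "t < n - c1" using lv by simp
        then have "w!(s+t) = w!(s+t+p)" using pp \<open>\<not> c1 < p\<close> c1 unfolding s_def n_def by auto
        moreover have "s + t + p = c1 + t" using \<open>\<not> c1 < p\<close> unfolding s_def by auto
        ultimately show "v ! t = drop s w ! t" using vnth \<open>t < n - c1\<close> c1 unfolding n_def by simp
      qed
    qed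
    moreover have "(drop s w, v) \<in> lexord r" using c1 p0 \<open>\<not> c1 < p\<close> unfolding s_def n_def by (intro max1) (auto simp: n_def)
    ultimately show False using asyL by blast
  qed
  have norep: "\<not> rep w c1 m" if m: "0 < m" "m < p" for m
  proof
    assume R: "rep w c1 m"
    then have Rt: "\<And>t. c1 \<le> t + m \<Longrightarrow> t < c1 \<Longrightarrow> t + m < n \<Longrightarrow> w!t = w!(t+m)"
      unfolding rep_def n_def by blast
    show False
    proof (cases "m \<le> c1")
      case True
      define s where "s = c1 - m"
      have sn: "s < n" "s \<noteq> c1" using True m c1 unfolding s_def n_def by auto
      have sv: "(drop s w, v) \<in> lexord r" using max1 sn by blast
      show False
      proof (cases "c1 + m \<le> n")
        case True
        have "(drop m (drop s w), drop m v) \<in> lexord r"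
        proof (rule lexord_cancel[OF sv irr])
          show "m \<le> length (drop s w)" "m \<le> length v" using True \<open>m \<le> c1\<close> lv unfolding s_def n_def by auto
          show "\<forall>t<m. drop s w ! t = v ! t"
          proof (intro allI impI)
            fix t assume "t < m"
            then have "w!(s+t) = w!(s+t+m)" using Rt \<open>m \<le> c1\<close> True unfolding s_def by auto
            moreover have "s + t + m = c1 + t" using \<open>m \<le> c1\<close> unfolding s_def by auto
            ultimately show "drop s w ! t = v ! t" using vnth \<open>t < m\<close> True sn unfolding n_def by simp
          qed
        qed
        moreover have "drop m (drop s w) = v" unfolding v_def s_def using \<open>m \<le> c1\<close> by simp
        moreover have "drop m v = drop (c1+m) w" unfolding v_def by (simp add: add.commute)
        ultimately have vv: "(v, drop (c1+m) w) \<in> lexord r" by simp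
        show False
        proof (cases "c1 + m = n")
          case True then show False using vv unfolding n_def by simp
        next
          case False
          then have "(drop (c1+m) w, v) \<in> lexord r" using max1 \<open>c1 + m \<le> n\<close> m by auto
          then show False using vv asyL by blast
        qed
      next
        case False
        have "(v, drop s w) \<in> lexord r"
        proof (rule lexord_prefixI)
          show "length v < length (drop s w)" using lv \<open>m \<le> c1\<close> m c1 unfolding s_def n_def by auto
          show "\<forall>t<length v. v ! t = drop s w ! t"
          proof (intro allI impI)
            fix t assume "t < length v"
            then have "t < n - c1" using lv by simp
            then have "w!(s+t) = w!(s+t+m)" using Rt \<open>m \<le> c1\<close> False unfolding s_def by auto
            moreover have "s + t + m = c1 + t" using \<open>m \<le> c1\<close> unfolding s_def by auto
            ultimately show "v ! t = drop s w ! t" using vnth \<open>t < n - c1\<close> sn unfolding n_def by simp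
          qed
        qed
        then show False using sv asyL by blast
      qed
    next
      case False
      show False
      proof (cases "n \<le> c1 + m")
        case True
        have "\<forall>t. t + m < n \<longrightarrow> w!t = w!(t+m)" using Rt False True by auto
        then show False using notper m by blast
      next
        case False2: False
        have E1: "\<And>t. t < c1 \<Longrightarrow> w!t = w!(t+m)" using Rt False False2 by auto
        define v3 where "v3 = drop (c1+m) w"
        define x' where "x' = drop c2 w"
        define y where "y = drop (c2+m) w"
        have "(y, x') \<in> lexord (r\<inverse>)" using c2 False2 le m unfolding y_def x'_def n_def by auto
        then have "(drop (c1-c2) y, drop (c1-c2) x') \<in> lexord (r\<inverse>)"
        proof (rule lexord_cancel[OF _ irr'])
          show "c1 - c2 \<le> length y" "c1 - c2 \<le> length x'" using False2 le unfolding y_def x'_def n_def by auto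
          show "\<forall>t<c1 - c2. y ! t = x' ! t"
          proof (intro allI impI)
            fix t assume "t < c1 - c2"
            then have "w!(c2+t) = w!(c2+t+m)" using E1 by auto
            then show "y ! t = x' ! t" using \<open>t < c1 - c2\<close> False2 le unfolding y_def x'_def n_def
              by (simp add: add.commute add.left_commute)
          qed
        qed
        moreover have "drop (c1-c2) y = v3" unfolding y_def v3_def using le by simp
        moreover have "drop (c1-c2) x' = v" unfolding x'_def v_def using le by simp
        ultimately have A1: "(v3, v) \<in> lexord (r\<inverse>)" by simp
        have A2: "(v3, v) \<in> lexord r" using max1 False2 m unfolding v3_def by auto
        have "length v3 < length v \<and> (\<forall>t<length v3. v3!t = v!t)"
          using lexord_both_prefix[OF asy irr A2 A1] .
        then have E2: "\<And>t. t < n - c1 - m \<Longrightarrow> w!(c1+m+t) = w!(c1+t)"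
          unfolding v3_def v_def n_def by auto
        have "\<forall>t. t + m < n \<longrightarrow> w!t = w!(t+m)"
        proof (intro allI impI)
          fix t assume "t + m < n"
          show "w!t = w!(t+m)"
          proof (cases "t < c1")
            case True then show ?thesis using E1 by auto
          next
            case False
            then have "t - c1 < n - c1 - m" using \<open>t + m < n\<close> by auto
            from E2[OF this] show ?thesis using False by (simp add: add.commute add.left_commute)
          qed
        qed
        then show False using notper m by blast
      qed
    qed
  qed
  show ?thesis using c1lt norep by blast
qed



lemma strict_order_ex: "\<exists>r::('a\<times>'a) set. (\<forall>a. (a,a)\<notin>r) \<and> trans r \<and> (\<forall>a b. (a,b)\<in>r \<or> a=b \<or> (b,a)\<in>r)"
proof -
  have "\<exists>r::'a rel. Well_order r \<and> Field r = UNIV" by (rule well_ordering)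
  then obtain r0 :: "'a rel" where W: "Well_order r0" "Field r0 = UNIV" by (elim exE conjE)
  have LO: "Linear_order r0" using W(1) by (simp add: well_order_on_def)
  then have PO: "Partial_order r0" and TO: "Total r0" by (simp_all add: linear_order_on_def)
  from PO have T: "trans r0" and A: "antisym r0" by (simp_all add: partial_order_on_def preorder_on_def)
  have L: "\<forall>x y. x \<noteq> y \<longrightarrow> (x,y)\<in>r0 \<or> (y,x)\<in>r0"
    using TO unfolding W(2) total_on_def by blast
  define r where "r = r0 - Id"
  have "trans r" unfolding r_def
  proof (rule transI)
    fix x y z assume "(x,y) \<in> r0 - Id" "(y,z) \<in> r0 - Id"
    then have xy: "(x,y) \<in> r0" "(y,z) \<in> r0" "x \<noteq> y" "y \<noteq> z" by auto
    then have "(x,z) \<in> r0" using T by (meson transD)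
    moreover have "x \<noteq> z"
    proof
      assume "x = z"
      then have "(y,x) \<in> r0" using xy by simp
      then have "x = y" using xy(1) A by (meson antisymD)
      then show False using xy by simp
    qed
    ultimately show "(x,z) \<in> r0 - Id" by auto
  qed
  moreover have "\<forall>a. (a,a)\<notin>r" unfolding r_def by auto
  moreover have "\<forall>a b. (a,b)\<in>r \<or> a=b \<or> (b,a)\<in>r" unfolding r_def using L by auto
  ultimately show ?thesis by blast
qed

lemma max_idx:
  assumes "w \<noteq> []" "trans R" "\<forall>x y. (x,y)\<in>R \<or> x=y \<or> (y,x)\<in>R"
  shows "\<exists>c1<length w. \<forall>c<length w. c\<noteq>c1 \<longrightarrow> (drop c w, drop c1 w) \<in> R"
proof -
  have "\<exists>x\<in>(\<lambda>c. drop c w) ` {..<length w}. \<forall>y\<in>(\<lambda>c. drop c w) ` {..<length w}. y \<noteq> x \<longrightarrow> (y,x) \<in> R"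
    using assms by (intro max_ex) auto
  then obtain c1 where c1: "c1 < length w" "\<forall>c<length w. drop c w \<noteq> drop c1 w \<longrightarrow> (drop c w, drop c1 w) \<in> R"
    by auto
  have "\<forall>c<length w. c\<noteq>c1 \<longrightarrow> (drop c w, drop c1 w) \<in> R"
  proof (intro allI impI)
    fix c assume "c < length w" "c \<noteq> c1"
    then have "length (drop c w) \<noteq> length (drop c1 w)" using c1 by auto
    then have "drop c w \<noteq> drop c1 w" by (auto dest: arg_cong[where f=length])
    then show "(drop c w, drop c1 w) \<in> R" using c1(2) \<open>c < length w\<close> by blast
  qed
  then show ?thesis using c1 by blast
qed

lemma cft:
  assumes "w \<noteq> []" "is_period w p" "\<forall>q<p. \<not> is_period w q"
  shows "\<exists>c<p. \<forall>m. 0<m \<longrightarrow> m<p \<longrightarrow> \<not> rep w c m"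
proof -
  obtain r :: "('a\<times>'a) set" where r: "\<forall>a. (a,a)\<notin>r" "trans r" "\<forall>a b. (a,b)\<in>r \<or> a=b \<or> (b,a)\<in>r"
    using strict_order_ex[where 'a='a] by (elim exE conjE)
  have r'1: "\<forall>a. (a,a)\<notin>r\<inverse>" using r(1) by simp
  have r'2: "trans (r\<inverse>)" using r(2) unfolding trans_def by blast
  have r'3: "\<forall>a b. (a,b)\<in>r\<inverse> \<or> a=b \<or> (b,a)\<in>r\<inverse>"
  proof (intro allI)
    fix a b show "(a,b)\<in>r\<inverse> \<or> a=b \<or> (b,a)\<in>r\<inverse>" using r(3)[rule_format, of a b] by auto
  qed
  note r' = r'1 r'2 r'3
  have lin: "\<forall>x y. (x,y)\<in>lexord r \<or> x=y \<or> (y,x)\<in>lexord r"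
    using lexord_linear[OF r(3)] by blast
  have lin': "\<forall>x y. (x,y)\<in>lexord (r\<inverse>) \<or> x=y \<or> (y,x)\<in>lexord (r\<inverse>)"
    using lexord_linear[OF r'(3)] by blast
  obtain c1 where c1: "c1 < length w" "\<forall>c<length w. c\<noteq>c1 \<longrightarrow> (drop c w, drop c1 w) \<in> lexord r"
    using max_idx[OF assms(1) lexord_transI[OF r(2)] lin] by blast
  obtain c2 where c2: "c2 < length w" "\<forall>c<length w. c\<noteq>c2 \<longrightarrow> (drop c w, drop c2 w) \<in> lexord (r\<inverse>)"
    using max_idx[OF assms(1) lexord_transI[OF r'(2)] lin'] by blast
  show ?thesis
  proof (cases "c2 \<le> c1")
    case True
    from cft_core[OF r(1,2) assms(2,3) c1 c2 True] show ?thesis by blast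
  next
    case False
    have c1': "\<forall>c<length w. c\<noteq>c1 \<longrightarrow> (drop c w, drop c1 w) \<in> lexord ((r\<inverse>)\<inverse>)" using c1 by simp
    from cft_core[OF r'(1,2) assms(2,3) c2 c1(1) c1'] False show ?thesis by auto
  qed
qed



theorem lemma4:
  fixes w :: "'a list"
  assumes "w \<noteq> []" and "min_period w > 1"
  shows "\<exists>i. critical_point w i \<and> (\<forall>i'. critical_point w i' \<longrightarrow> i \<le> i') \<and>
             (border_k w + 1 < i \<and> i \<le> length w \<and>
              (int i - int (local_period w i) < 1 \<or> i + local_period w i - 1 > length w)) \<and>
             (\<forall>i'. border_k w + 1 < i' \<and> i' \<le> length w \<and>
              (int i' - int (local_period w i') < 1 \<or> i' + local_period w i' - 1 > length w)
              \<longrightarrow> i \<le> i')"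
proof -
  define n where "n = length w"
  define p where "p = min_period w"
  define k where "k = border_k w"
  have n0: "0 < n" using assms(1) unfolding n_def by simp
  have perN: "is_period w n" unfolding period_eq n_def using n0 n_def by auto
  have Pp: "is_period w p" unfolding p_def min_period_def by (rule LeastI) (rule perN)
  have pmin: "\<forall>q<p. \<not> is_period w q" unfolding p_def min_period_def using not_less_Least by blast
  from Pp have p0: "0 < p" "p \<le> n" and pp: "\<forall>t. t + p < n \<longrightarrow> w!t = w!(t+p)"
    unfolding period_eq n_def by auto
  have p1: "1 < p" using assms(2) unfolding p_def .
  have repp: "\<And>c. rep w c p" using pp unfolding rep_def n_def by auto
  have mu1: "0 < local_period w i \<and> rep w (i-1) (local_period w i)" if "1 \<le> i" for i
    unfolding lp_eq[OF that] by (rule LeastI[of _ p]) (use p0 repp in auto)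
  have mu_le: "local_period w i \<le> m" if "1 \<le> i" "0 < m" "rep w (i-1) m" for i m
    unfolding lp_eq[OF that(1)] by (rule Least_le) (use that in auto)
  have mu_p: "local_period w i \<le> p" if "1 \<le> i" for i
    using mu_le[OF that p0(1) repp] .
  have mu_min: "\<not> rep w (i-1) m" if "1 \<le> i" "0 < m" "m < local_period w i" for i m
    using that(3) unfolding lp_eq[OF that(1)] using not_less_Least that(2) by blast
  define B where "B = {l. \<exists>j. 1 < j \<and> j \<le> min_period w \<and> j + l - 1 \<le> length w \<and> substr w 1 l = substr w j l}"
  have kB: "k = Max B" unfolding k_def border_k_def B_def ..
  have finB: "finite B"
  proof (rule finite_subset)
    show "B \<subseteq> {..n}" unfolding B_def n_def by auto
  qed simp
  have "0 \<in> B" unfolding B_def using p1 n0 unfolding p_def n_def substr_def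
    by (intro CollectI exI[of _ 2]) (auto simp: Suc_le_eq)
  then have "k \<in> B" unfolding kB using finB by (intro Max_in) auto
  then obtain j0 where j0: "1 < j0" "j0 \<le> p" "j0 + k - 1 \<le> n" "substr w 1 k = substr w j0 k"
    unfolding B_def p_def n_def by blast
  have kle: "\<And>l. l \<in> B \<Longrightarrow> l \<le> k" unfolding kB using finB by (rule Max_ge)
  have K1: "w!t = w!(t + (j0-1))" if "t < k" for t
  proof -
    have "take k w ! t = take k (drop (j0-1) w) ! t" using j0(4) unfolding substr_def by simp
    then show ?thesis using that j0 unfolding n_def by (simp add: add.commute)
  qed
  have K2: "l \<le> k" if "0 < m" "m < p" "m + l \<le> n" "\<forall>t<l. w!t = w!(t+m)" for m l
  proof (rule kle)
    have "substr w 1 l = substr w (m+1) l" unfolding substr_def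
      using that unfolding n_def by (intro nth_equalityI) (auto simp: add.commute)
    then show "l \<in> B" unfolding B_def p_def[symmetric] n_def[symmetric]
      using that by (intro CollectI exI[of _ "m+1"]) auto
  qed
  have S2: "local_period w i < p" if "1 \<le> i" "i \<le> k+1" for i
  proof -
    have "rep w (i-1) (j0-1)" unfolding rep_def using K1 that by auto
    then have "local_period w i \<le> j0 - 1" using mu_le[OF that(1)] j0 by auto
    then show ?thesis using j0 by auto
  qed
  have S3: "local_period w i = p" if "k+1 < i" "i \<le> n" "i \<le> local_period w i" for i
  proof (rule ccontr)
    define m where "m = local_period w i"
    assume "local_period w i \<noteq> p"
    moreover have "local_period w i \<le> p" using mu_p[of i] that by auto
    ultimately have mp: "m < p" unfolding m_def by simp
    have i1: "1 \<le> i" using that by auto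
    have m0: "0 < m" using mu1[OF i1] unfolding m_def by simp
    have R: "rep w (i-1) m" using mu1[OF i1] unfolding m_def by simp
    have mi: "i \<le> m" using that unfolding m_def by simp
    show False
    proof (cases "(i-1) + m \<le> n")
      case True
      have "\<forall>t<i-1. w!t = w!(t+m)" using R True mi unfolding rep_def n_def by auto
      then have "i - 1 \<le> k" using K2[OF m0 mp] True by (simp add: add.commute)
      then show False using that by auto
    next
      case False
      have "\<forall>t. t + m < n \<longrightarrow> w!t = w!(t+m)" using R False mi unfolding rep_def n_def by auto
      then have "is_period w m" unfolding period_eq n_def[symmetric] using m0 mp p0 by auto
      then show False using pmin mp by auto
    qed
  qed
  obtain c where c: "c < p" "\<forall>m. 0<m \<longrightarrow> m<p \<longrightarrow> \<not> rep w c m"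
    using cft[OF assms(1) Pp pmin] by blast
  have critc: "critical_point w (c+1)"
  proof -
    have "0 < local_period w (c+1)" "rep w c (local_period w (c+1))" using mu1[of "c+1"] by auto
    then have "\<not> local_period w (c+1) < p" using c(2) by blast
    moreover have "local_period w (c+1) \<le> p" using mu_p[of "c+1"] by simp
    ultimately have "local_period w (c+1) = p" by simp
    then show ?thesis unfolding critical_point_def using c p0 unfolding p_def n_def by auto
  qed
  define i0 where "i0 = (LEAST i. critical_point w i)"
  have ci0: "critical_point w i0" unfolding i0_def by (rule LeastI) (rule critc)
  have i0min: "\<forall>i'. critical_point w i' \<longrightarrow> i0 \<le> i'" unfolding i0_def using Least_le by blast
  have "i0 \<le> c + 1" using i0min critc by blast
  then have i0p: "i0 \<le> p" using c by simp
  have i0: "1 \<le> i0" "i0 \<le> n" "local_period w i0 = p" using ci0 unfolding critical_point_def p_def n_def by auto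
  have ki0: "k+1 < i0"
  proof (rule ccontr)
    assume "\<not> k + 1 < i0"
    then show False using S2[OF i0(1)] i0(3) by auto
  qed
  have last: "i0 \<le> i'" if "k+1 < i'" "i' \<le> n"
    "int i' - int (local_period w i') < 1 \<or> i' + local_period w i' - 1 > n" for i'
  proof (rule ccontr)
    assume "\<not> i0 \<le> i'"
    then have lt: "i' < i0" by simp
    have i'1: "1 \<le> i'" using that by auto
    show False
    proof (cases "int i' - int (local_period w i') < 1")
      case True
      then have "local_period w i' = p" using S3[OF that(1,2)] by auto
      then have "critical_point w i'" unfolding critical_point_def using i'1 that unfolding p_def n_def by auto
      then show False using i0min lt by auto
    next
      case False
      define m where "m = local_period w i'"
      have mlt: "m < i'" and over: "i' + m - 1 > n" using False that(3) unfolding m_def by auto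
      have m0: "0 < m" and R: "rep w (i'-1) m" using mu1[OF i'1] unfolding m_def by auto
      have "m < local_period w i0" using mlt lt i0p i0(3) by auto
      then have "\<not> rep w (i0-1) m" using mu_min[OF i0(1) m0] by blast
      then obtain t where t: "i0 - 1 \<le> t + m" "t < i0 - 1" "t + m < n" "w!t \<noteq> w!(t+m)"
        unfolding rep_def n_def by blast
      have "w!t = w!(t+m)" using R t lt over unfolding rep_def n_def by auto
      then show False using t by simp
    qed
  qed
  have nonint: "int i0 - int (local_period w i0) < 1" using i0(3) i0p by simp
  have last': "\<forall>i'. k+1 < i' \<and> i' \<le> n \<and>
     (int i' - int (local_period w i') < 1 \<or> i' + local_period w i' - 1 > n) \<longrightarrow> i0 \<le> i'"
    using last by blast
  show ?thesis unfolding k_def[symmetric] n_def[symmetric]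
    using ci0 i0min ki0 i0(2) nonint last' by blast
qed


end
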